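(* Let $\gamma$ be the probability measure on $\partial^{\mathrm{in}}V_{N,r}$ defined by $\gamma(x):=\mathsf P^x(\tau_{\mathbb{Z}^2\setminus W_N}<\tau^+_{V_{N,r}})/(2\operatorname{Cap}^{W_N}(V_{N,r}))$, let $\overline\phi:=\sum_{x\in\partial^{\mathrm{in}}V_{N,r}}\gamma(x)\phi(x)$, and let $\gamma\Pi$ denote the law of $S_{\tau_{\partial^{\mathrm{in}}V_N}}$ under $\mathsf P^\gamma$. Then $$\operatorname{Var}(\overline\phi)=\frac{\mathsf P^{\gamma\Pi}(\tau_{V_{N,r}}<\tau_{\mathbb{Z}^2\setminus W_N})}{2\operatorname{Cap}^{W_N}(V_{N,r})}.$$
   Context: $V\subset W\subset\mathbb{R}^2$ non-empty bounded simply connected open sets, $V$ compactly contained in $W$; $W_N:=NW\cap\mathbb{Z}^2$, $V_N:=NV\cap\mathbb{Z}^2$; for $r>0$ with $r/N$ small, $V_{N,r}:=NV^{r/N}\cap\mathbb{Z}^2$ where $V^s:=\{x\in V:\operatorname{dist}(x,\partial V)>s\}$. $h$ is the DGFF on $W_N$ with zero boundary condition (covariance the Green function $G_{W_N}$). $\partial^{\mathrm{in}}\Lambda:=\{x\in\Lambda:\exists y\notin\Lambda,|x-y|_1=1\}$, $\Lambda^-:=\Lambda\setminus\partial^{\mathrm{in}}\Lambda$. $\phi$ is the harmonic extension of $h|_{\mathbb{Z}^2\setminus V_N^-}$ to $V_N^-$. $\operatorname{Cap}^{W_N}(A):=\inf\{\frac12\langle f,Lf\rangle:f|_A\equiv1,f|_{\mathbb{Z}^2\setminus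 W_N}\equiv0\}$ with $Lf(x)=\frac14\sum_{y\sim x}(f(x)-f(y))$. $(S_t)$ simple random walk; $\mathsf P^\mu$ its law from initial distribution $\mu$; $\tau_A:=\inf\{t\ge0:S_t\in A\}$, $\tau^+_A:=\inf\{t\ge1:S_t\in A\}$. *)

theory Defs
  imports "HOL-Probability.Probability"
begin

type_synonym pt = "int \<times> int"

definition emb :: "pt \<Rightarrow> real \<times> real" where
  "emb z = (real_of_int (fst z), real_of_int (snd z))"

definition lat :: "nat \<Rightarrow> (real \<times> real) set \<Rightarrow> pt set" where
  "lat N S = {z. emb z \<in> (\<lambda>x. real N *\<^sub>R x) ` S}"

definition inner_part :: "(real \<times> real) set \<Rightarrow> real \<Rightarrow> (real \<times> real) set" where
  "inner_part V s = {x \<in> V. infdist x (frontier V) > s}"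

definition adj :: "pt \<Rightarrow> pt \<Rightarrow> bool" where
  "adj x y \<longleftrightarrow> \<bar>fst x - fst y\<bar> + \<bar>snd x - snd y\<bar> = 1"

definition inner_bd :: "pt set \<Rightarrow> pt set" where
  "inner_bd L = {x \<in> L. \<exists>y. y \<notin> L \<and> adj x y}"

definition lat_int :: "pt set \<Rightarrow> pt set" where
  "lat_int L = L - inner_bd L"

definition Lap :: "(pt \<Rightarrow> real) \<Rightarrow> pt \<Rightarrow> real" where
  "Lap f x = (1/4) * (\<Sum>y\<in>{y. adj x y}. (f x - f y))"

definition Cap :: "pt set \<Rightarrow> pt set \<Rightarrow> real" where
  "Cap W A = Inf {(1/2) * infsum (\<lambda>x. f x * Lap f x) UNIV | f.
                   (\<forall>x\<in>A. f x = 1) \<and> (\<forall>x. x \<notin> W \<longrightarrow> f x = 0)}"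

definition harm_ext :: "pt set \<Rightarrow> (pt \<Rightarrow> real) \<Rightarrow> pt \<Rightarrow> real" where
  "harm_ext D g = (THE f. (\<forall>x. x \<notin> D \<longrightarrow> f x = g x) \<and> (\<forall>x\<in>D. Lap f x = 0))"

definition steps :: "pt set" where
  "steps = {(1,0), (-1,0), (0,1), (0,-1)}"

text \<open>Law of the i.i.d. increment sequence.\<close>
definition SRW :: "pt stream measure" where
  "SRW = stream_space (measure_pmf (pmf_of_set steps))"

definition walk :: "pt \<Rightarrow> pt stream \<Rightarrow> nat \<Rightarrow> pt" where
  "walk x w t = (fst x + (\<Sum>i<t. fst (w !! i)), snd x + (\<Sum>i<t. snd (w !! i)))"

definition Pr :: "pt \<Rightarrow> ((nat \<Rightarrow> pt) \<Rightarrow> bool) \<Rightarrow> real" where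
  "Pr x E = measure SRW {w \<in> space SRW. E (walk x w)}"

definition Pr_init :: "pt set \<Rightarrow> (pt \<Rightarrow> real) \<Rightarrow> ((nat \<Rightarrow> pt) \<Rightarrow> bool) \<Rightarrow> real" where
  "Pr_init F mu E = (\<Sum>x\<in>F. mu x * Pr x E)"

definition hit :: "pt set \<Rightarrow> (nat \<Rightarrow> pt) \<Rightarrow> enat" where
  "hit A p = (if \<exists>t. p t \<in> A then enat (LEAST t. p t \<in> A) else \<infinity>)"

definition hitp :: "pt set \<Rightarrow> (nat \<Rightarrow> pt) \<Rightarrow> enat" where
  "hitp A p = (if \<exists>t\<ge>1. p t \<in> A then enat (LEAST t. t \<ge> 1 \<and> p t \<in> A) else \<infinity>)"

definition Green :: "pt set \<Rightarrow> pt \<Rightarrow> pt \<Rightarrow> real" where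
  "Green W x y = (\<Sum>t. Pr x (\<lambda>p. p t = y \<and> enat t < hit (- W) p))"

text \<open>h is a centered Gaussian field on (probability space) M, vanishing off the finite
  set W, with covariance C: every linear combination of the values on W is centered normal
  with the variance prescribed by C (a.s. zero if that variance is zero).\<close>
definition centered_gaussian_field ::
  "'a measure \<Rightarrow> pt set \<Rightarrow> (pt \<Rightarrow> pt \<Rightarrow> real) \<Rightarrow> (pt \<Rightarrow> 'a \<Rightarrow> real) \<Rightarrow> bool" where
  "centered_gaussian_field M W C h \<longleftrightarrow>
     prob_space M \<and> (\<forall>x. h x \<in> borel_measurable M) \<and>
     (\<forall>x. x \<notin> W \<longrightarrow> (\<forall>\<omega>\<in>space M. h x \<omega> = 0)) \<and>
     (\<forall>c :: pt \<Rightarrow> real.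
        let s = (\<Sum>x\<in>W. \<Sum>y\<in>W. c x * c y * C x y) in
        (s > 0 \<longrightarrow> distributed M lborel (\<lambda>\<omega>. \<Sum>x\<in>W. c x * h x \<omega>) (normal_density 0 (sqrt s))) \<and>
        (s \<le> 0 \<longrightarrow> (AE \<omega> in M. (\<Sum>x\<in>W. c x * h x \<omega>) = 0)))"

definition DGFF :: "'a measure \<Rightarrow> pt set \<Rightarrow> (pt \<Rightarrow> 'a \<Rightarrow> real) \<Rightarrow> bool" where
  "DGFF M WN h \<longleftrightarrow> centered_gaussian_field M WN (Green WN) h"

end

theory Submission
  imports Defs
begin

definition addp :: "pt \<Rightarrow> pt \<Rightarrow> pt" where
  "addp x s = (fst x + fst s, snd x + snd s)"

definition pc :: "pt \<Rightarrow> (nat \<Rightarrow> pt) \<Rightarrow> nat \<Rightarrow> pt" where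
  "pc x p t = (case t of 0 \<Rightarrow> x | Suc n \<Rightarrow> p n)"

lemma steps_finite[simp]: "finite steps" and steps_ne[simp]: "steps \<noteq> {}"
  by (auto simp: steps_def)

lemma card_steps[simp]: "card steps = 4"
  by (simp add: steps_def)

lemma space_SRW[simp]: "space SRW = UNIV"
  by (simp add: SRW_def space_stream_space streams_UNIV)

lemma prob_SRW: "prob_space SRW"
  unfolding SRW_def by (rule prob_space.prob_space_stream_space) (rule prob_space_measure_pmf)

lemma walk_0[simp]: "walk x w 0 = x"
  by (simp add: walk_def)

lemma walk_Suc: "walk x w (Suc t) = addp (walk x w t) (w !! t)"
  by (simp add: walk_def addp_def)

lemma walk_Stream: "walk x (s ## w) = pc x (walk (addp x s) w)"
proof
  fix t show "walk x (s ## w) t = pc x (walk (addp x s) w) t"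
    by (cases t) (simp_all add: walk_def pc_def addp_def sum.lessThan_Suc_shift del: sum.lessThan_Suc)
qed

lemma snth_meas[measurable]: "(\<lambda>w. w !! n) \<in> measurable SRW (count_space UNIV)"
proof -
  have "measurable SRW (count_space UNIV) = measurable SRW (measure_pmf (pmf_of_set steps))"
    by (rule measurable_cong_sets) simp_all
  then show ?thesis unfolding SRW_def using measurable_snth by auto
qed

lemma walk_meas[measurable]: "(\<lambda>w. walk x w t) \<in> measurable SRW (count_space UNIV)"
proof (induction t)
  case 0 then show ?case by simp
next
  case (Suc t)
  have "(\<lambda>w. (\<lambda>b w. addp b (w !! t)) (walk x w t) w) \<in> measurable SRW (count_space UNIV)"
    by (rule measurable_compose_countable[OF _ Suc]) (rule measurable_compose[OF snth_meas], simp)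
  then show ?case by (simp add: walk_Suc)
qed

lemma hit_eq_enat: "hit A p = enat n \<longleftrightarrow> p n \<in> A \<and> (\<forall>t<n. p t \<notin> A)"
proof -
  { assume "p n \<in> A" "\<forall>t<n. p t \<notin> A"
    then have "(LEAST t. p t \<in> A) = n" by (intro Least_equality) (auto simp: not_less[symmetric])
    then have "hit A p = enat n" using \<open>p n \<in> A\<close> by (auto simp: hit_def) }
  moreover
  { assume h: "hit A p = enat n"
    then have ex: "\<exists>t. p t \<in> A" by (auto simp: hit_def split: if_splits)
    with h have "n = (LEAST t. p t \<in> A)" by (auto simp: hit_def)
    then have "p n \<in> A \<and> (\<forall>t<n. p t \<notin> A)" using ex by (metis LeastI not_less_Least) }
  ultimately show ?thesis by blast
qed

lemma hit_eq_inf: "hit A p = \<infinity> \<longleftrightarrow> (\<forall>t. p t \<notin> A)"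
  by (auto simp: hit_def)

lemma hitp_eq_enat: "hitp A p = enat n \<longleftrightarrow> n \<ge> 1 \<and> p n \<in> A \<and> (\<forall>t<n. t \<ge> 1 \<longrightarrow> p t \<notin> A)"
proof -
  { assume "n \<ge> 1" "p n \<in> A" "\<forall>t<n. t \<ge> 1 \<longrightarrow> p t \<notin> A"
    then have "(LEAST t. t \<ge> 1 \<and> p t \<in> A) = n" by (intro Least_equality) (auto simp: not_less[symmetric])
    then have "hitp A p = enat n" using \<open>p n \<in> A\<close> \<open>n \<ge> 1\<close> by (auto simp: hitp_def) }
  moreover
  { assume h: "hitp A p = enat n"
    then have ex: "\<exists>t. t \<ge> 1 \<and> p t \<in> A" by (auto simp: hitp_def split: if_splits)
    with h have "n = (LEAST t. t \<ge> 1 \<and> p t \<in> A)" by (auto simp: hitp_def)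
    then have "n \<ge> 1 \<and> p n \<in> A \<and> (\<forall>t<n. t \<ge> 1 \<longrightarrow> p t \<notin> A)" using ex
      by (metis (mono_tags, lifting) LeastI not_less_Least) }
  ultimately show ?thesis by blast
qed

lemma hitp_eq_inf: "hitp A p = \<infinity> \<longleftrightarrow> (\<forall>t\<ge>1. p t \<notin> A)"
  by (auto simp: hitp_def)

lemma hit_meas[measurable]: "(\<lambda>w. hit A (walk x w)) \<in> measurable SRW (count_space UNIV)"
  unfolding measurable_count_space_eq2_countable
proof safe
  fix a :: enat
  show "(\<lambda>w. hit A (walk x w)) -` {a} \<inter> space SRW \<in> sets SRW"
  proof (cases a)
    case (enat n)
    have "(\<lambda>w. hit A (walk x w)) -` {a} \<inter> space SRW = {w \<in> space SRW. walk x w n \<in> A \<and> (\<forall>t<n. walk x w t \<notin> A)}"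
      by (auto simp: enat hit_eq_enat)
    also have "\<dots> \<in> sets SRW" by measurable
    finally show ?thesis .
  next
    case infinity
    have "(\<lambda>w. hit A (walk x w)) -` {a} \<inter> space SRW = {w \<in> space SRW. \<forall>t. walk x w t \<notin> A}"
      by (auto simp: infinity hit_eq_inf)
    also have "\<dots> \<in> sets SRW" by measurable
    finally show ?thesis .
  qed
qed simp

lemma hitp_meas[measurable]: "(\<lambda>w. hitp A (walk x w)) \<in> measurable SRW (count_space UNIV)"
  unfolding measurable_count_space_eq2_countable
proof safe
  fix a :: enat
  show "(\<lambda>w. hitp A (walk x w)) -` {a} \<inter> space SRW \<in> sets SRW"
  proof (cases a)
    case (enat n)
    have "(\<lambda>w. hitp A (walk x w)) -` {a} \<inter> space SRW = {w \<in> space SRW. n \<ge> 1 \<and> walk x w n \<in> A \<and> (\<forall>t<n. t \<ge> 1 \<longrightarrow> walk x w t \<notin> A)}"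
      by (auto simp: enat hitp_eq_enat)
    also have "\<dots> \<in> sets SRW" by measurable
    finally show ?thesis .
  next
    case infinity
    have "(\<lambda>w. hitp A (walk x w)) -` {a} \<inter> space SRW = {w \<in> space SRW. \<forall>t\<ge>1. walk x w t \<notin> A}"
      by (auto simp: infinity hitp_eq_inf)
    also have "\<dots> \<in> sets SRW" by measurable
    finally show ?thesis .
  qed
qed simp

lemma Stream_meas: "(\<lambda>w. s ## w) \<in> measurable SRW SRW"
proof -
  have "(\<lambda>w. s ## w) \<in> measurable (stream_space (measure_pmf (pmf_of_set steps))) (stream_space (measure_pmf (pmf_of_set steps)))"
    by (rule measurable_Stream) simp_all
  then show ?thesis by (simp add: SRW_def)
qed

lemma Pr_nonneg: "Pr x E \<ge> 0"
  by (simp add: Pr_def)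

lemma Pr_le1: "Pr x E \<le> 1"
  unfolding Pr_def using prob_space.prob_le_1[OF prob_SRW] by blast

lemma markov:
  assumes meas: "{w \<in> space SRW. E (walk x w)} \<in> sets SRW"
  shows "Pr x E = (\<Sum>s\<in>steps. Pr (addp x s) (\<lambda>p. E (pc x p))) / 4"
proof -
  interpret P: prob_space SRW by (rule prob_SRW)
  define S where "S = {w \<in> space SRW. E (walk x w)}"
  define T where "T s = {w \<in> space SRW. E (pc x (walk (addp x s) w))}" for s
  have S[measurable]: "S \<in> sets SRW" using meas by (simp add: S_def)
  have T: "T s \<in> sets SRW" for s
  proof -
    have "T s = (\<lambda>w. s ## w) -` S \<inter> space SRW"
      by (auto simp: T_def S_def walk_Stream)
    also have "\<dots> \<in> sets SRW" using measurable_sets[OF Stream_meas S] .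
    finally show ?thesis .
  qed
  have ind: "indicator S (s ## w) = (indicator (T s) w :: ennreal)" for s w
    by (auto simp: S_def T_def walk_Stream split: split_indicator)
  have "emeasure SRW S = (\<integral>\<^sup>+w. indicator S w \<partial>SRW)"
    using S by simp
  also have "\<dots> = (\<integral>\<^sup>+s. (\<integral>\<^sup>+w. indicator S (s ## w) \<partial>SRW) \<partial>measure_pmf (pmf_of_set steps))"
    unfolding SRW_def
    by (rule prob_space.nn_integral_stream_space[OF prob_space_measure_pmf])
       (use S in \<open>simp add: SRW_def\<close>)
  also have "\<dots> = (\<integral>\<^sup>+s. emeasure SRW (T s) \<partial>measure_pmf (pmf_of_set steps))"
    by (simp add: ind T)
  also have "\<dots> = (\<Sum>s\<in>steps. emeasure SRW (T s) * ennreal (1/4))"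
    by (subst nn_integral_measure_pmf_finite) (auto simp: indicator_def)
  also have "\<dots> = ennreal ((\<Sum>s\<in>steps. measure SRW (T s)) / 4)"
  proof -
    have "(\<Sum>s\<in>steps. emeasure SRW (T s) * ennreal (1/4)) = (\<Sum>s\<in>steps. ennreal (measure SRW (T s) / 4))"
      by (simp add: P.emeasure_eq_measure ennreal_mult[symmetric])
    also have "\<dots> = ennreal (\<Sum>s\<in>steps. measure SRW (T s) / 4)"
      by (rule sum_ennreal) simp
    finally show ?thesis by (simp add: sum_divide_distrib)
  qed
  finally have "emeasure SRW S = ennreal ((\<Sum>s\<in>steps. measure SRW (T s)) / 4)" .
  then have "measure SRW S = (\<Sum>s\<in>steps. measure SRW (T s)) / 4"
    by (simp add: P.emeasure_eq_measure sum_nonneg)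
  then show ?thesis by (simp add: Pr_def S_def T_def)
qed

definition nsum :: "(pt \<Rightarrow> real) \<Rightarrow> pt \<Rightarrow> real" where
  "nsum u x = (\<Sum>s\<in>steps. u (addp x s))"

lemma nsum_expand: "nsum u x = u (fst x + 1, snd x) + u (fst x - 1, snd x) + u (fst x, snd x + 1) + u (fst x, snd x - 1)"
  by (simp add: nsum_def steps_def addp_def)

lemma adj_set: "{y. adj x y} = addp x ` steps"
proof -
  have "adj x y \<longleftrightarrow> y \<in> addp x ` steps" for y
  proof
    assume "adj x y"
    then have "\<bar>fst x - fst y\<bar> + \<bar>snd x - snd y\<bar> = 1" by (simp add: adj_def)
    then have "y = (fst x + 1, snd x) \<or> y = (fst x - 1, snd x) \<or> y = (fst x, snd x + 1) \<or> y = (fst x, snd x - 1)"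
      by (cases y) (auto simp: abs_if split: if_splits)
    then show "y \<in> addp x ` steps" by (auto simp: steps_def addp_def)
  next
    assume "y \<in> addp x ` steps"
    then show "adj x y" by (auto simp: steps_def addp_def adj_def)
  qed
  then show ?thesis by auto
qed

lemma inj_addp: "inj (addp x)"
  by (auto simp: inj_def addp_def prod_eq_iff)

lemma Lap_nsum: "Lap f x = f x - nsum f x / 4"
proof -
  have "Lap f x = (1/4) * (\<Sum>y\<in>addp x ` steps. (f x - f y))"
    by (simp add: Lap_def adj_set)
  also have "\<dots> = (1/4) * (\<Sum>s\<in>steps. (f x - f (addp x s)))"
    by (subst sum.reindex) (auto intro: inj_on_subset[OF inj_addp])
  also have "\<dots> = f x - nsum f x / 4"
    by (simp add: sum_subtractf nsum_def algebra_simps)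
  finally show ?thesis .
qed

lemma nsum_le:
  assumes "\<And>s. s \<in> steps \<Longrightarrow> u (addp x s) \<le> m" "nsum u x = 4 * m"
  shows "\<And>s. s \<in> steps \<Longrightarrow> u (addp x s) = m"
proof -
  have "(\<Sum>s\<in>steps. m - u (addp x s)) = 0"
    using assms(2) by (simp add: sum_subtractf nsum_def)
  then have "\<forall>s\<in>steps. m - u (addp x s) = 0"
    by (subst sum_nonneg_eq_0_iff[symmetric]) (use assms(1) in auto)
  then show "\<And>s. s \<in> steps \<Longrightarrow> u (addp x s) = m" by auto
qed

lemma harm_le0:
  assumes D: "finite D" and out: "\<And>x. x \<notin> D \<Longrightarrow> w x = 0"
    and h: "\<And>x. x \<in> D \<Longrightarrow> nsum w x = 4 * w x"
  shows "w x \<le> 0"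
proof (rule ccontr)
  assume "\<not> w x \<le> 0"
  then have wx: "w x > 0" by simp
  then have xD: "x \<in> D" using out by (metis less_irrefl)
  define m where "m = Max (w ` D)"
  have m_ge: "w z \<le> m" if "z \<in> D" for z using D that by (simp add: m_def)
  have mpos: "m > 0" using m_ge[OF xD] wx by simp
  have "m \<in> w ` D" unfolding m_def using D xD by (intro Max_in) auto
  then obtain y where yD: "y \<in> D" and wy: "w y = m" by auto
  have le_m: "w z \<le> m" for z
    using m_ge[of z] out[of z] mpos by (cases "z \<in> D") auto
  have all: "w (addp y (int n, 0)) = m" for n
  proof (induction n)
    case 0 then show ?case using wy by (simp add: addp_def)
  next
    case (Suc n)
    define z where "z = addp y (int n, 0)"
    have wz: "w z = m" using Suc by (simp add: z_def)
    then have zD: "z \<in> D" using out mpos by (metis less_irrefl)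
    have "w (addp z (1,0)) = m"
      by (rule nsum_le[of w z m]) (use le_m h[OF zD] wz in \<open>auto simp: steps_def\<close>)
    moreover have "addp z (1,0) = addp y (int (Suc n), 0)" by (simp add: z_def addp_def)
    ultimately show ?case by simp
  qed
  have "range (\<lambda>n. addp y (int n, 0)) \<subseteq> D"
  proof (rule image_subsetI)
    fix n
    show "addp y (int n, 0) \<in> D"
    proof (rule ccontr)
      assume "addp y (int n, 0) \<notin> D"
      then have "w (addp y (int n, 0)) = 0" by (rule out)
      then show False using all[of n] mpos by simp
    qed
  qed
  moreover have "inj (\<lambda>n. addp y (int n, 0))"
    by (auto simp: inj_def addp_def)
  ultimately have "finite (UNIV :: nat set)"
    using D by (meson finite_imageD finite_subset inj_on_subset subset_UNIV)
  then show False by simp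
qed

lemma harm_unique:
  assumes D: "finite D" and out: "\<And>x. x \<notin> D \<Longrightarrow> u x = v x"
    and hu: "\<And>x. x \<in> D \<Longrightarrow> nsum u x = 4 * u x"
    and hv: "\<And>x. x \<in> D \<Longrightarrow> nsum v x = 4 * v x"
  shows "u x = v x"
proof -
  have lin: "nsum (\<lambda>y. c * (u y - v y)) z = c * (nsum u z - nsum v z)" for c z
    by (simp add: nsum_def sum_subtractf sum_distrib_left algebra_simps)
  have "(\<lambda>y. 1 * (u y - v y)) x \<le> 0"
    by (rule harm_le0[OF D], use out in simp, simp only: lin, use hu hv in simp)
  moreover have "(\<lambda>y. (-1) * (u y - v y)) x \<le> 0"
    by (rule harm_le0[OF D], use out in simp, simp only: lin, use hu hv in simp)
  ultimately show ?thesis by simp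
qed

definition negp :: "pt \<Rightarrow> pt" where "negp s = (- fst s, - snd s)"

lemma addp_negp: "addp (addp x s) (negp s) = x" "addp (addp x (negp s)) s = x"
  by (simp_all add: addp_def negp_def)

lemma delta_off:
  assumes "finite W" "\<And>x. x \<notin> W \<Longrightarrow> f x = (0::real)"
  shows "f y = (\<Sum>z\<in>W. if z = y then f z else 0)"
  using assms by (cases "y \<in> W") (auto simp: sum.delta')

lemma shift_sum:
  assumes W: "finite W" and f: "\<And>x. x \<notin> W \<Longrightarrow> f x = (0::real)" and g: "\<And>x. x \<notin> W \<Longrightarrow> g x = 0"
  shows "(\<Sum>x\<in>W. g x * f (addp x s)) = (\<Sum>x\<in>W. f x * g (addp x (negp s)))"
proof -
  have "(\<Sum>x\<in>W. g x * f (addp x s)) = (\<Sum>x\<in>W. \<Sum>z\<in>W. g x * (if z = addp x s then f z else 0))"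
    by (simp add: sum_distrib_left[symmetric]) (intro sum.cong refl arg_cong2[where f=times] delta_off[OF W f])
  also have "\<dots> = (\<Sum>z\<in>W. \<Sum>x\<in>W. g x * (if z = addp x s then f z else 0))"
    by (rule sum.swap)
  also have "\<dots> = (\<Sum>z\<in>W. \<Sum>x\<in>W. f z * (if x = addp z (negp s) then g x else 0))"
  proof (intro sum.cong refl)
    fix z x
    have "z = addp x s \<longleftrightarrow> x = addp z (negp s)" using addp_negp by metis
    then show "g x * (if z = addp x s then f z else 0) = f z * (if x = addp z (negp s) then g x else 0)"
      by auto
  qed
  also have "\<dots> = (\<Sum>z\<in>W. f z * g (addp z (negp s)))"
    by (simp add: sum_distrib_left[symmetric]) (intro sum.cong refl arg_cong2[where f=times] delta_off[OF W g, symmetric])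
  finally show ?thesis .
qed

lemma negp_steps: "negp ` steps = steps" "inj_on negp steps"
  by (auto simp: steps_def negp_def inj_on_def)

lemma nsum_negp: "(\<Sum>s\<in>steps. u (addp x (negp s))) = nsum u x"
proof -
  have "(\<Sum>s\<in>steps. u (addp x (negp s))) = (\<Sum>s\<in>negp ` steps. u (addp x s))"
    by (subst sum.reindex[OF negp_steps(2)]) simp
  then show ?thesis by (simp add: negp_steps nsum_def)
qed

lemma nsum_sym:
  assumes W: "finite W" and f: "\<And>x. x \<notin> W \<Longrightarrow> f x = (0::real)" and g: "\<And>x. x \<notin> W \<Longrightarrow> g x = 0"
  shows "(\<Sum>x\<in>W. g x * nsum f x) = (\<Sum>x\<in>W. f x * nsum g x)"
proof -
  have "(\<Sum>x\<in>W. g x * nsum f x) = (\<Sum>s\<in>steps. \<Sum>x\<in>W. g x * f (addp x s))"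
    by (simp add: nsum_def sum_distrib_left sum.swap[of _ W])
  also have "\<dots> = (\<Sum>s\<in>steps. \<Sum>x\<in>W. f x * g (addp x (negp s)))"
    by (rule sum.cong[OF refl]) (rule shift_sum[OF W f g])
  also have "\<dots> = (\<Sum>x\<in>W. f x * nsum g x)"
    by (simp add: nsum_negp[symmetric] sum_distrib_left sum.swap[of _ steps])
  finally show ?thesis .
qed

lemma nsum_pos:
  assumes W: "finite W" and g: "\<And>x. x \<notin> W \<Longrightarrow> g x = (0::real)"
  shows "(\<Sum>x\<in>W. g x * nsum g x) \<le> 4 * (\<Sum>x\<in>W. (g x)\<^sup>2)"
proof -
  have one: "(\<Sum>x\<in>W. g x * g (addp x s)) \<le> (\<Sum>x\<in>W. (g x)\<^sup>2)" for s
  proof -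
    have sq: "(\<Sum>x\<in>W. (g (addp x s))\<^sup>2) \<le> (\<Sum>x\<in>W. (g x)\<^sup>2)"
    proof -
      have "(\<Sum>x\<in>W. (g (addp x s))\<^sup>2) = (\<Sum>x\<in>W. indicator W x * (\<lambda>y. (g y)\<^sup>2) (addp x s))"
        by (intro sum.cong) auto
      also have "\<dots> = (\<Sum>x\<in>W. (g x)\<^sup>2 * indicator W (addp x (negp s)))"
        by (rule shift_sum[OF W]) (auto simp: g)
      also have "\<dots> \<le> (\<Sum>x\<in>W. (g x)\<^sup>2)"
        by (intro sum_mono) (auto simp: indicator_def)
      finally show ?thesis .
    qed
    have "(\<Sum>x\<in>W. g x * g (addp x s)) \<le> (\<Sum>x\<in>W. ((g x)\<^sup>2 + (g (addp x s))\<^sup>2) / 2)"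
    proof (intro sum_mono)
      fix x
      have "0 \<le> (g x - g (addp x s))\<^sup>2" by simp
      then show "g x * g (addp x s) \<le> ((g x)\<^sup>2 + (g (addp x s))\<^sup>2) / 2"
        by (simp add: power2_eq_square algebra_simps)
    qed
    also have "\<dots> = ((\<Sum>x\<in>W. (g x)\<^sup>2) + (\<Sum>x\<in>W. (g (addp x s))\<^sup>2)) / 2"
      by (simp add: sum.distrib[symmetric] sum_divide_distrib)
    also have "\<dots> \<le> (\<Sum>x\<in>W. (g x)\<^sup>2)" using sq by simp
    finally show ?thesis .
  qed
  have "(\<Sum>x\<in>W. g x * nsum g x) = (\<Sum>s\<in>steps. \<Sum>x\<in>W. g x * g (addp x s))"
    by (simp add: nsum_def sum_distrib_left sum.swap[of _ W])
  also have "\<dots> \<le> (\<Sum>s\<in>steps. (\<Sum>x\<in>W. (g x)\<^sup>2))"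
    by (rule sum_mono) (rule one)
  also have "\<dots> = 4 * (\<Sum>x\<in>W. (g x)\<^sup>2)" by simp
  finally show ?thesis .
qed

lemma hit_pc: "hit A (pc x p) = (if x \<in> A then 0 else eSuc (hit A p))"
proof (cases "x \<in> A")
  case True
  then show ?thesis using hit_eq_enat[of A "pc x p" 0] by (simp add: pc_def zero_enat_def)
next
  case False
  show ?thesis
  proof (cases "hit A p")
    case (enat n)
    then have "p n \<in> A \<and> (\<forall>t<n. p t \<notin> A)" by (simp add: hit_eq_enat)
    then have "hit A (pc x p) = enat (Suc n)"
      using False by (subst hit_eq_enat) (auto simp: pc_def less_Suc_eq_0_disj)
    then show ?thesis using False enat by (simp add: eSuc_enat)
  next
    case infinity
    then have "\<forall>t. p t \<notin> A" by (simp add: hit_eq_inf)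
    then have "hit A (pc x p) = \<infinity>"
      using False by (subst hit_eq_inf) (auto simp: pc_def split: nat.splits)
    then show ?thesis using False infinity by simp
  qed
qed

lemma hitp_pc: "hitp A (pc x p) = eSuc (hit A p)"
proof (cases "hit A p")
  case (enat n)
  then have "p n \<in> A \<and> (\<forall>t<n. p t \<notin> A)" by (simp add: hit_eq_enat)
  then have "hitp A (pc x p) = enat (Suc n)"
    by (subst hitp_eq_enat) (auto simp: pc_def less_Suc_eq_0_disj)
  then show ?thesis using enat by (simp add: eSuc_enat)
next
  case infinity
  then have "\<forall>t. p t \<notin> A" by (simp add: hit_eq_inf)
  then have "hitp A (pc x p) = \<infinity>"
    by (subst hitp_eq_inf) (auto simp: pc_def split: nat.splits)
  then show ?thesis using infinity by simp
qed

lemma pc_Suc[simp]: "pc x p (Suc n) = p n" and pc_0[simp]: "pc x p 0 = x"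
  by (simp_all add: pc_def)

lemma Pr_True: "Pr x (\<lambda>p. True) = 1"
  using prob_space.prob_space[OF prob_SRW] by (simp add: Pr_def)

lemma Pr_False: "Pr x (\<lambda>p. False) = 0"
  by (simp add: Pr_def)

lemma Pr_cong: "(\<And>w. E (walk x w) = F (walk x w)) \<Longrightarrow> Pr x E = Pr x F"
  by (simp add: Pr_def)

lemma pred_cmp:
  fixes f :: "pt stream \<Rightarrow> 'a::countable" and g :: "pt stream \<Rightarrow> 'b::countable"
  assumes f: "f \<in> measurable SRW (count_space UNIV)" and g: "g \<in> measurable SRW (count_space UNIV)"
  shows "{w \<in> space SRW. R (f w) (g w)} \<in> sets SRW"
proof -
  have "(\<lambda>w. (\<lambda>a w. (\<lambda>b w. R a b) (g w) w) (f w) w) \<in> measurable SRW (count_space UNIV)"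
    by (rule measurable_compose_countable[OF _ f], rule measurable_compose_countable[OF _ g]) simp
  then have "(\<lambda>w. R (f w) (g w)) -` {True} \<inter> space SRW \<in> sets SRW"
    by (rule measurable_sets) simp
  moreover have "(\<lambda>w. R (f w) (g w)) -` {True} \<inter> space SRW = {w \<in> space SRW. R (f w) (g w)}" by auto
  ultimately show ?thesis by simp
qed

definition hp :: "pt set \<Rightarrow> pt set \<Rightarrow> pt \<Rightarrow> real" where
  "hp A B x = Pr x (\<lambda>p. hit A p < hit B p)"

lemma meas_hp: "{w \<in> space SRW. hit A (walk x w) < hit B (walk x w)} \<in> sets SRW"
  by (rule pred_cmp[OF hit_meas hit_meas])

lemma hit0_iff: "hit A p = 0 \<longleftrightarrow> p 0 \<in> A"
  using hit_eq_enat[of A p 0] by (simp add: enat_0)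

lemma hp_A: "x \<in> A \<Longrightarrow> x \<notin> B \<Longrightarrow> hp A B x = 1"
proof -
  assume x: "x \<in> A" "x \<notin> B"
  have lt: "hit A (walk x w) < hit B (walk x w)" for w
  proof -
    have "hit A (walk x w) = 0" using x by (simp add: hit0_iff)
    moreover have "hit B (walk x w) \<noteq> 0" using x by (simp add: hit0_iff)
    ultimately show ?thesis by (simp add: gr_zeroI)
  qed
  have "hp A B x = Pr x (\<lambda>p. True)" unfolding hp_def by (intro Pr_cong) (simp add: lt)
  then show ?thesis by (simp add: Pr_True)
qed

lemma Pr_cong': "(\<And>p. E p = F p) \<Longrightarrow> Pr x E = Pr x F"
  by (simp add: Pr_def)

lemma hp_B: "x \<in> B \<Longrightarrow> hp A B x = 0"
proof -
  assume x: "x \<in> B"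
  have "hp A B x = Pr x (\<lambda>p. False)" unfolding hp_def
  proof (intro Pr_cong)
    fix w
    have "hit B (walk x w) = 0" using x by (simp add: hit0_iff)
    then show "(hit A (walk x w) < hit B (walk x w)) = False" by simp
  qed
  then show ?thesis by (simp add: Pr_False)
qed

lemma hp_harm: "x \<notin> A \<Longrightarrow> x \<notin> B \<Longrightarrow> nsum (hp A B) x = 4 * hp A B x"
proof -
  assume x: "x \<notin> A" "x \<notin> B"
  have "hp A B x = (\<Sum>s\<in>steps. Pr (addp x s) (\<lambda>p. hit A (pc x p) < hit B (pc x p))) / 4"
    unfolding hp_def by (rule markov) (rule meas_hp)
  also have "\<dots> = nsum (hp A B) x / 4"
    unfolding nsum_def hp_def using x by (simp add: hit_pc)
  finally show ?thesis by simp
qed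

lemma eSuc_inf_iff[simp]: "eSuc a = \<infinity> \<longleftrightarrow> a = \<infinity>"
  by (metis eSuc_infinity eSuc_inject)

lemma meas_inf: "{w \<in> space SRW. hit A (walk x w) = \<infinity>} \<in> sets SRW"
  by (rule pred_cmp[OF hit_meas measurable_count_space_const])

lemma escape_null:
  assumes W: "finite W"
  shows "Pr x (\<lambda>p. hit (- W) p = \<infinity>) = 0"
proof -
  define q where "q y = Pr y (\<lambda>p. hit (- W) p = \<infinity>)" for y
  have out: "q y = 0" if "y \<notin> W" for y
  proof -
    have "q y = Pr y (\<lambda>p. False)" unfolding q_def
    proof (intro Pr_cong)
    fix w
    have "hit (- W) (walk y w) = 0" using that by (simp add: hit0_iff)
    then show "(hit (- W) (walk y w) = \<infinity>) = False" by simp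
  qed
    then show ?thesis by (simp add: Pr_False)
  qed
  have harm: "nsum q y = 4 * q y" if "y \<in> W" for y
  proof -
    have "q y = (\<Sum>s\<in>steps. Pr (addp y s) (\<lambda>p. hit (- W) (pc y p) = \<infinity>)) / 4"
      unfolding q_def by (rule markov) (rule meas_inf)
    also have "\<dots> = nsum q y / 4"
      unfolding nsum_def q_def using that by (simp add: hit_pc)
    finally show ?thesis by simp
  qed
  have "q x = (\<lambda>_. 0) x"
    by (rule harm_unique[OF W]) (use out harm in \<open>auto simp: nsum_def\<close>)
  then show ?thesis by (simp add: q_def)
qed

lemma hp_compl:
  assumes AB: "A \<inter> B = {}" and null: "Pr x (\<lambda>p. hit B p = \<infinity>) = 0"
  shows "hp A B x + hp B A x = 1"
proof -
  interpret P: prob_space SRW by (rule prob_SRW)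
  define S1 where "S1 = {w \<in> space SRW. hit A (walk x w) < hit B (walk x w)}"
  define S2 where "S2 = {w \<in> space SRW. hit B (walk x w) < hit A (walk x w)}"
  define S3 where "S3 = {w \<in> space SRW. hit B (walk x w) = \<infinity>}"
  have m: "S1 \<in> sets SRW" "S2 \<in> sets SRW" "S3 \<in> sets SRW"
    unfolding S1_def S2_def S3_def by (rule meas_hp meas_inf)+
  have d: "S1 \<inter> S2 = {}" by (auto simp: S1_def S2_def)
  have sub: "space SRW - (S1 \<union> S2) \<subseteq> S3"
  proof
    fix w assume w: "w \<in> space SRW - (S1 \<union> S2)"
    then have eqm: "hit A (walk x w) = hit B (walk x w)" by (auto simp: S1_def S2_def)
    show "w \<in> S3"
    proof (cases "hit B (walk x w)")
      case (enat n)
      moreover have "hit A (walk x w) = enat n" using eqm enat by simp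
      ultimately have "walk x w n \<in> A" "walk x w n \<in> B" by (auto simp: hit_eq_enat)
      then show ?thesis using AB by auto
    qed (simp add: S3_def)
  qed
  have "P.prob (space SRW - (S1 \<union> S2)) \<le> P.prob S3"
    by (rule P.finite_measure_mono[OF sub m(3)])
  also have "P.prob S3 = 0" using null by (simp add: Pr_def S3_def)
  finally have "1 - P.prob (S1 \<union> S2) \<le> 0"
    using P.prob_compl[of "S1 \<union> S2"] m by auto
  moreover have "P.prob (S1 \<union> S2) \<le> 1" by (rule P.prob_le_1)
  ultimately have "P.prob (S1 \<union> S2) = 1" by linarith
  moreover have "P.prob (S1 \<union> S2) = P.prob S1 + P.prob S2"
    by (rule P.finite_measure_Union[OF m(1,2) d])
  ultimately have "P.prob S1 + P.prob S2 = 1" by simp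
  then show ?thesis by (simp add: hp_def Pr_def S1_def S2_def)
qed

definition ga :: "pt set \<Rightarrow> pt \<Rightarrow> nat \<Rightarrow> pt \<Rightarrow> real" where
  "ga W y t x = Pr x (\<lambda>p. p t = y \<and> enat t < hit (- W) p)"

lemma Green_ga: "Green W x y = (\<Sum>t. ga W y t x)"
  by (simp add: Green_def ga_def)

lemma hit_le: "p t \<in> A \<Longrightarrow> hit A p \<le> enat t"
  by (auto simp: hit_def intro: Least_le)

lemma meas_ga: "{w \<in> space SRW. walk x w t = y \<and> enat t < hit (- W) (walk x w)} \<in> sets SRW"
  by (rule pred_cmp[OF walk_meas hit_meas])

lemma ga_nonneg: "ga W y t x \<ge> 0"
  by (simp add: ga_def Pr_nonneg)

lemma ga_out: "x \<notin> W \<Longrightarrow> ga W y t x = 0"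
proof -
  assume x: "x \<notin> W"
  have "ga W y t x = Pr x (\<lambda>p. False)" unfolding ga_def
  proof (intro Pr_cong)
    fix w
    have "hit (- W) (walk x w) = 0" using x by (simp add: hit0_iff)
    then show "(walk x w t = y \<and> enat t < hit (- W) (walk x w)) = False" by simp
  qed
  then show ?thesis by (simp add: Pr_False)
qed

lemma ga_out2: "y \<notin> W \<Longrightarrow> ga W y t x = 0"
proof -
  assume y: "y \<notin> W"
  have "ga W y t x = Pr x (\<lambda>p. False)" unfolding ga_def
  proof (intro Pr_cong)
    fix w
    show "(walk x w t = y \<and> enat t < hit (- W) (walk x w)) = False"
      using hit_le[of "walk x w" t "- W"] y by auto
  qed
  then show ?thesis by (simp add: Pr_False)
qed

lemma ga_0: "x \<in> W \<Longrightarrow> ga W y 0 x = (if x = y then 1 else 0)"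
proof -
  assume x: "x \<in> W"
  have "ga W y 0 x = Pr x (\<lambda>p. x = y)" unfolding ga_def
  proof (intro Pr_cong)
    fix w
    have "hit (- W) (walk x w) \<noteq> 0" using x by (simp add: hit0_iff)
    then show "(walk x w 0 = y \<and> enat 0 < hit (- W) (walk x w)) = (x = y)"
      by (simp add: enat_0 gr_zeroI)
  qed
  then show ?thesis by (cases "x = y") (simp_all add: Pr_True Pr_False)
qed

lemma ga_Suc: "x \<in> W \<Longrightarrow> 4 * ga W y (Suc n) x = nsum (ga W y n) x"
proof -
  assume x: "x \<in> W"
  have "ga W y (Suc n) x = (\<Sum>s\<in>steps. Pr (addp x s) (\<lambda>p. pc x p (Suc n) = y \<and> enat (Suc n) < hit (- W) (pc x p))) / 4"
    unfolding ga_def by (rule markov) (rule meas_ga)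
  also have "\<dots> = nsum (ga W y n) x / 4"
    unfolding nsum_def ga_def using x by (simp add: hit_pc eSuc_enat[symmetric])
  finally show ?thesis by simp
qed

lemma nsum_mono: "(\<And>s. s \<in> steps \<Longrightarrow> u (addp x s) \<le> v (addp x s)) \<Longrightarrow> nsum u x \<le> nsum v x"
  unfolding nsum_def by (rule sum_mono)

lemma ga_summable:
  assumes W: "finite W"
  shows "summable (\<lambda>t. ga W y t x)"
proof (cases "x \<in> W")
  case False
  then show ?thesis by (simp add: ga_out)
next
  case True
  define sq :: "pt \<Rightarrow> real" where "sq z = (real_of_int (fst z))\<^sup>2 + (real_of_int (snd z))\<^sup>2" for z
  define K where "K = (\<Sum>x\<in>W. sq x) + (\<Sum>x\<in>W. \<Sum>s\<in>steps. sq (addp x s))"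
  define g where "g z = K - sq z" for z
  have sq_nn: "sq z \<ge> 0" for z by (simp add: sq_def)
  have gW: "g z \<ge> 0" if "z \<in> W" for z
  proof -
    have "sq z \<le> (\<Sum>x\<in>W. sq x)" by (rule member_le_sum) (use that W sq_nn in auto)
    moreover have "0 \<le> (\<Sum>x\<in>W. \<Sum>s\<in>steps. sq (addp x s))" by (intro sum_nonneg sq_nn)
    ultimately show ?thesis by (simp add: g_def K_def)
  qed
  have gN: "g (addp z s) \<ge> 0" if "z \<in> W" "s \<in> steps" for z s
  proof -
    have "sq (addp z s) \<le> (\<Sum>s\<in>steps. sq (addp z s))" by (rule member_le_sum) (use that sq_nn in auto)
    also have "\<dots> \<le> (\<Sum>x\<in>W. \<Sum>s\<in>steps. sq (addp x s))"
      by (rule member_le_sum[where f="\<lambda>x. \<Sum>s\<in>steps. sq (addp x s)"]) (use that W in \<open>auto intro!: sum_nonneg simp: sq_def\<close>)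
    moreover have "0 \<le> (\<Sum>x\<in>W. sq x)" by (intro sum_nonneg sq_nn)
    ultimately show ?thesis by (simp add: g_def K_def)
  qed
  have nsum_g: "nsum g z = 4 * g z - 4" for z
    by (simp add: nsum_expand g_def sq_def power2_eq_square algebra_simps)
  have bound: "\<forall>z\<in>W. (\<Sum>t<T. ga W y t z) \<le> g z" for T
  proof (induction T)
    case 0 then show ?case using gW by simp
  next
    case (Suc T)
    show ?case
    proof
      fix z assume z: "z \<in> W"
      have "(\<Sum>t<Suc T. ga W y t z) = ga W y 0 z + (\<Sum>t<T. ga W y (Suc t) z)"
        by (simp add: sum.lessThan_Suc_shift del: sum.lessThan_Suc)
      also have "(\<Sum>t<T. ga W y (Suc t) z) = (\<Sum>t<T. nsum (ga W y t) z / 4)"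
        by (intro sum.cong refl) (simp add: ga_Suc[OF z, symmetric])
      also have "\<dots> = nsum (\<lambda>v. \<Sum>t<T. ga W y t v) z / 4"
        by (simp add: nsum_def sum_divide_distrib[symmetric] sum.swap[of _ steps])
      also have "nsum (\<lambda>v. \<Sum>t<T. ga W y t v) z \<le> nsum g z"
      proof (rule nsum_mono)
        fix s assume s: "s \<in> steps"
        show "(\<Sum>t<T. ga W y t (addp z s)) \<le> g (addp z s)"
        proof (cases "addp z s \<in> W")
          case True then show ?thesis using Suc.IH by blast
        next
          case False then show ?thesis using gN[OF z s] by (simp add: ga_out)
        qed
      qed
      moreover have "ga W y 0 z \<le> 1" using ga_0[OF z] by simp
      ultimately show "(\<Sum>t<Suc T. ga W y t z) \<le> g z"
        using nsum_g[of z] by linarith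
    qed
  qed
  show ?thesis
    by (rule summableI_nonneg_bounded[where x="g x"]) (use bound True ga_nonneg in auto)
qed

lemma Green_out: "x \<notin> W \<Longrightarrow> Green W x y = 0"
  by (simp add: Green_ga ga_out)

lemma Green_out2: "y \<notin> W \<Longrightarrow> Green W x y = 0"
  by (simp add: Green_ga ga_out2)

lemma Green_nonneg: "finite W \<Longrightarrow> Green W x y \<ge> 0"
  unfolding Green_ga by (intro suminf_nonneg ga_summable ga_nonneg)

lemma Green_eq:
  assumes W: "finite W" and x: "x \<in> W"
  shows "nsum (\<lambda>z. Green W z y) x = 4 * Green W x y - 4 * (if x = y then 1 else 0)"
proof -
  have sm: "summable (\<lambda>t. ga W y t z)" for z by (rule ga_summable[OF W])
  have "(\<Sum>n. ga W y (Suc n) x) = Green W x y - ga W y 0 x"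
    unfolding Green_ga by (rule suminf_split_head[OF sm])
  moreover have "(\<Sum>n. ga W y (Suc n) x) = (\<Sum>n. nsum (ga W y n) x / 4)"
    using ga_Suc[OF x] by (metis nonzero_mult_div_cancel_left zero_neq_numeral)
  moreover have "(\<Sum>n. nsum (ga W y n) x / 4) = (\<Sum>n. nsum (ga W y n) x) / 4"
    by (rule suminf_divide) (unfold nsum_def, rule summable_sum, rule sm)
  moreover have "(\<Sum>n. nsum (ga W y n) x) = nsum (\<lambda>z. Green W z y) x"
    unfolding nsum_def Green_ga by (rule suminf_sum) (rule sm)
  ultimately show ?thesis using ga_0[OF x] by auto
qed

lemma Green_sym:
  assumes W: "finite W"
  shows "Green W a b = Green W b a"
proof -
  have fa: "\<And>x. x \<notin> W \<Longrightarrow> Green W x a = 0" and fb: "\<And>x. x \<notin> W \<Longrightarrow> Green W x b = 0"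
    by (simp_all add: Green_out)
  have key: "(\<Sum>x\<in>W. Green W x c * (4 * Green W x d - nsum (\<lambda>z. Green W z d) x)) = 4 * Green W d c" for c d
  proof -
    have "(\<Sum>x\<in>W. Green W x c * (4 * Green W x d - nsum (\<lambda>z. Green W z d) x))
        = (\<Sum>x\<in>W. 4 * (if x = d then Green W x c else 0))"
      by (intro sum.cong refl) (simp add: Green_eq[OF W])
    also have "\<dots> = 4 * Green W d c"
      by (cases "d \<in> W") (simp_all add: sum_distrib_left[symmetric] Green_out sum.delta[OF W])
    finally show ?thesis .
  qed
  have "(\<Sum>x\<in>W. Green W x a * nsum (\<lambda>z. Green W z b) x) = (\<Sum>x\<in>W. Green W x b * nsum (\<lambda>z. Green W z a) x)"
    by (rule nsum_sym[OF W]) (simp_all add: Green_out)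
  then have "4 * Green W b a = 4 * Green W a b"
    using key[of a b] key[of b a]
    by (simp add: right_diff_distrib sum_subtractf algebra_simps)
  then show ?thesis by simp
qed

definition eqm :: "pt set \<Rightarrow> pt set \<Rightarrow> pt \<Rightarrow> real" where
  "eqm W A x = Pr x (\<lambda>p. hit (- W) p < hitp A p)"

lemma meas_eq: "{w \<in> space SRW. hit B (walk x w) < hitp A (walk x w)} \<in> sets SRW"
  by (rule pred_cmp[OF hit_meas hitp_meas])

lemma nsum_const_minus: "nsum (\<lambda>y. 1 - u y) x = 4 - nsum u x"
  by (simp add: nsum_def sum_subtractf)

lemma eqm_formula:
  assumes W: "finite W" and A: "A \<subseteq> W" and x: "x \<in> W"
  shows "eqm W A x = 1 - nsum (hp A (- W)) x / 4"
proof -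
  have "eqm W A x = (\<Sum>s\<in>steps. Pr (addp x s) (\<lambda>p. hit (- W) (pc x p) < hitp A (pc x p))) / 4"
    unfolding eqm_def by (rule markov) (rule meas_eq)
  also have "\<dots> = nsum (hp (- W) A) x / 4"
    unfolding nsum_def hp_def using x by (simp add: hit_pc hitp_pc)
  also have "hp (- W) A = (\<lambda>y. 1 - hp A (- W) y)"
  proof
    fix y
    have "hp A (- W) y + hp (- W) A y = 1"
      by (rule hp_compl) (use A escape_null[OF W] in auto)
    then show "hp (- W) A y = 1 - hp A (- W) y" by simp
  qed
  finally show ?thesis by (simp add: nsum_const_minus)
qed

lemma inner_bd_sub: "inner_bd A \<subseteq> A"
  by (auto simp: inner_bd_def)

lemma not_bd_nb: "x \<in> A \<Longrightarrow> x \<notin> inner_bd A \<Longrightarrow> s \<in> steps \<Longrightarrow> addp x s \<in> A"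
proof -
  assume x: "x \<in> A" "x \<notin> inner_bd A" and s: "s \<in> steps"
  have "addp x s \<in> {y. adj x y}" using s by (simp add: adj_set)
  then have "adj x (addp x s)" by simp
  then show ?thesis using x unfolding inner_bd_def by blast
qed

lemma eqm_interior:
  assumes W: "finite W" and A: "A \<subseteq> W" and x: "x \<in> A" "x \<notin> inner_bd A"
  shows "eqm W A x = 0"
proof -
  have "nsum (hp A (- W)) x = (\<Sum>s\<in>steps. 1)"
    unfolding nsum_def using not_bd_nb[OF x] A by (intro sum.cong refl hp_A) auto
  moreover have "x \<in> W" using x A by auto
  ultimately show ?thesis using eqm_formula[OF W A] by simp
qed

lemma f_eq_on_W:
  assumes W: "finite W" and A: "A \<subseteq> W" and u: "u \<in> W"
  shows "nsum (hp A (- W)) u = 4 * hp A (- W) u - 4 * (if u \<in> inner_bd A then eqm W A u else 0)"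
proof (cases "u \<in> A")
  case True
  then have f1: "hp A (- W) u = 1" using u by (intro hp_A) auto
  show ?thesis
  proof (cases "u \<in> inner_bd A")
    case True
    then show ?thesis using eqm_formula[OF W A u] f1 by simp
  next
    case False
    then show ?thesis using eqm_formula[OF W A u] f1 eqm_interior[OF W A \<open>u \<in> A\<close> False] by simp
  qed
next
  case False
  then have "u \<notin> inner_bd A" using inner_bd_sub by blast
  then show ?thesis using hp_harm[of u A "- W"] False u by simp
qed

lemma last_exit:
  assumes W: "finite W" and A: "A \<subseteq> W"
  shows "hp A (- W) u = (\<Sum>x\<in>inner_bd A. Green W u x * eqm W A x)"
proof -
  define k where "k u = (\<Sum>x\<in>inner_bd A. Green W u x * eqm W A x)" for u
  define d where "d u = hp A (- W) u - k u" for u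
  have fin: "finite (inner_bd A)" using finite_subset[OF subset_trans[OF inner_bd_sub A] W] .
  have nk: "nsum k u = 4 * k u - 4 * (if u \<in> inner_bd A then eqm W A u else 0)" if u: "u \<in> W" for u
  proof -
    have "nsum k u = (\<Sum>x\<in>inner_bd A. nsum (\<lambda>z. Green W z x) u * eqm W A x)"
      unfolding k_def nsum_def by (subst sum.swap) (simp add: sum_distrib_right)
    also have "\<dots> = (\<Sum>x\<in>inner_bd A. (4 * Green W u x - 4 * (if u = x then 1 else 0)) * eqm W A x)"
      by (intro sum.cong refl) (simp add: Green_eq[OF W u])
    also have "\<dots> = 4 * k u - 4 * (\<Sum>x\<in>inner_bd A. (if u = x then eqm W A x else 0))"
    proof -
      have "(\<Sum>x\<in>inner_bd A. (4 * Green W u x - 4 * (if u = x then 1 else 0)) * eqm W A x)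
          = (\<Sum>x\<in>inner_bd A. 4 * (Green W u x * eqm W A x) - 4 * (if u = x then eqm W A x else 0))"
        by (intro sum.cong refl) (simp add: algebra_simps)
      then show ?thesis by (simp add: sum_subtractf sum_distrib_left[symmetric] k_def)
    qed
    also have "(\<Sum>x\<in>inner_bd A. (if u = x then eqm W A x else 0)) = (if u \<in> inner_bd A then eqm W A u else 0)"
      using sum.delta'[OF fin, of u "eqm W A"] by simp
    finally show ?thesis .
  qed
  have "d u = (\<lambda>_. 0) u"
  proof (rule harm_unique[OF W])
    fix x assume "x \<notin> W"
    then show "d x = 0" by (simp add: d_def k_def hp_B Green_out)
  next
    fix x assume x: "x \<in> W"
    have "nsum d x = nsum (hp A (- W)) x - nsum k x"
      by (simp add: d_def nsum_def sum_subtractf)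
    then show "nsum d x = 4 * d x"
      using nk[OF x] f_eq_on_W[OF W A x] by (simp add: d_def algebra_simps)
  qed (simp add: nsum_def)
  then show ?thesis by (simp add: d_def k_def)
qed

definition LL :: "(pt \<Rightarrow> real) \<Rightarrow> pt \<Rightarrow> real" where
  "LL v x = v x - nsum v x / 4"

definition QQ :: "pt set \<Rightarrow> (pt \<Rightarrow> real) \<Rightarrow> real" where
  "QQ W v = (\<Sum>x\<in>W. v x * LL v x)"

lemma infsum_QQ:
  assumes W: "finite W" and h: "\<And>x. x \<notin> W \<Longrightarrow> h x = 0"
  shows "infsum (\<lambda>x. h x * Lap h x) UNIV = QQ W h"
proof -
  have "infsum (\<lambda>x. h x * Lap h x) UNIV = infsum (\<lambda>x. h x * Lap h x) W"
    by (rule infsum_cong_neutral) (auto simp: h)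
  also have "\<dots> = QQ W h" using W by (simp add: QQ_def LL_def Lap_nsum)
  finally show ?thesis .
qed

lemma QQ_fstar:
  assumes W: "finite W" and A: "A \<subseteq> W"
  shows "QQ W (hp A (- W)) = (\<Sum>x\<in>inner_bd A. eqm W A x)"
proof -
  have "QQ W (hp A (- W)) = (\<Sum>x\<in>W. if x \<in> inner_bd A then eqm W A x else 0)"
    unfolding QQ_def
  proof (intro sum.cong refl)
    fix x assume x: "x \<in> W"
    have "LL (hp A (- W)) x = (if x \<in> inner_bd A then eqm W A x else 0)"
      using f_eq_on_W[OF W A x] by (simp add: LL_def field_simps)
    moreover have "x \<in> inner_bd A \<Longrightarrow> hp A (- W) x = 1"
      using inner_bd_sub A x by (intro hp_A) auto
    ultimately show "hp A (- W) x * LL (hp A (- W)) x = (if x \<in> inner_bd A then eqm W A x else 0)"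
      by auto
  qed
  also have "\<dots> = (\<Sum>x\<in>W \<inter> inner_bd A. eqm W A x)"
    by (rule sum.inter_restrict[OF W, symmetric])
  also have "W \<inter> inner_bd A = inner_bd A" using inner_bd_sub A by blast
  finally show ?thesis .
qed

lemma QQ_min:
  assumes W: "finite W" and A: "A \<subseteq> W"
    and h1: "\<And>x. x \<in> A \<Longrightarrow> h x = 1" and h0: "\<And>x. x \<notin> W \<Longrightarrow> h x = 0"
  shows "QQ W (hp A (- W)) \<le> QQ W h"
proof -
  define f where "f = hp A (- W)"
  define g where "g x = h x - f x" for x
  have f0: "f x = 0" if "x \<notin> W" for x using that by (simp add: f_def hp_B)
  have g0: "g x = 0" if "x \<notin> W" for x using that by (simp add: g_def f0 h0)
  have gA: "g x = 0" if "x \<in> A" for x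
  proof -
    have "x \<notin> - W" using that A by auto
    then show ?thesis using that by (simp add: g_def f_def h1 hp_A)
  qed
  have hfg: "h x = f x + g x" for x by (simp add: g_def)
  have Lh: "LL h x = LL f x + LL g x" for x
  proof -
    have "nsum h x = nsum f x + nsum g x" by (simp add: nsum_def hfg sum.distrib)
    then show ?thesis by (simp add: LL_def hfg field_simps)
  qed
  have c1: "(\<Sum>x\<in>W. g x * LL f x) = 0"
  proof (rule sum.neutral, rule ballI)
    fix x assume x: "x \<in> W"
    show "g x * LL f x = 0"
    proof (cases "x \<in> A")
      case True then show ?thesis by (simp add: gA)
    next
      case False
      then have "nsum f x = 4 * f x" unfolding f_def using x by (intro hp_harm) auto
      then show ?thesis by (simp add: LL_def)
    qed
  qed
  have c2: "(\<Sum>x\<in>W. f x * LL g x) = (\<Sum>x\<in>W. g x * LL f x)"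
  proof -
    have "(\<Sum>x\<in>W. g x * nsum f x) = (\<Sum>x\<in>W. f x * nsum g x)"
      by (rule nsum_sym[OF W f0 g0])
    then show ?thesis
      by (simp add: LL_def right_diff_distrib sum_subtractf sum_divide_distrib[symmetric] mult.commute)
  qed
  have c3: "(\<Sum>x\<in>W. g x * LL g x) \<ge> 0"
  proof -
    have "(\<Sum>x\<in>W. g x * nsum g x) \<le> 4 * (\<Sum>x\<in>W. (g x)\<^sup>2)" by (rule nsum_pos[OF W g0])
    moreover have "(\<Sum>x\<in>W. g x * LL g x) = (\<Sum>x\<in>W. (g x)\<^sup>2) - (\<Sum>x\<in>W. g x * nsum g x) / 4"
      by (simp add: LL_def right_diff_distrib sum_subtractf sum_divide_distrib power2_eq_square)
    ultimately show ?thesis by simp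
  qed
  have "QQ W h = (\<Sum>x\<in>W. f x * LL f x) + (\<Sum>x\<in>W. g x * LL f x) + (\<Sum>x\<in>W. f x * LL g x) + (\<Sum>x\<in>W. g x * LL g x)"
    unfolding QQ_def by (simp add: Lh hfg sum.distrib[symmetric] algebra_simps)
  then show ?thesis using c1 c2 c3 by (simp add: QQ_def f_def)
qed

lemma Cap_eq:
  assumes W: "finite W" and A: "A \<subseteq> W"
  shows "Cap W A = (\<Sum>x\<in>inner_bd A. eqm W A x) / 2"
proof -
  define S where "S = {(1/2) * infsum (\<lambda>x. f x * Lap f x) UNIV | f.
                   (\<forall>x\<in>A. f x = 1) \<and> (\<forall>x. x \<notin> W \<longrightarrow> f x = 0)}"
  have "Inf S = QQ W (hp A (- W)) / 2"
  proof (rule cInf_eq_minimum)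
    have "(\<forall>x\<in>A. hp A (- W) x = 1) \<and> (\<forall>x. x \<notin> W \<longrightarrow> hp A (- W) x = 0)"
      using A by (auto intro: hp_A hp_B)
    moreover have "QQ W (hp A (- W)) / 2 = (1/2) * infsum (\<lambda>x. hp A (- W) x * Lap (hp A (- W)) x) UNIV"
      by (subst infsum_QQ[OF W]) (auto intro: hp_B)
    ultimately show "QQ W (hp A (- W)) / 2 \<in> S" unfolding S_def by blast
  next
    fix z assume "z \<in> S"
    then obtain h where z: "z = (1/2) * infsum (\<lambda>x. h x * Lap h x) UNIV"
      and h1: "\<forall>x\<in>A. h x = 1" and h0: "\<forall>x. x \<notin> W \<longrightarrow> h x = 0"
      unfolding S_def by blast
    have "z = QQ W h / 2" using z by (subst (asm) infsum_QQ[OF W]) (use h0 in auto)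
    moreover have "QQ W (hp A (- W)) \<le> QQ W h"
      by (rule QQ_min[OF W A]) (use h1 h0 in auto)
    ultimately show "QQ W (hp A (- W)) / 2 \<le> z" by simp
  qed
  then show ?thesis unfolding Cap_def S_def[symmetric] using QQ_fstar[OF W A] by simp
qed

definition PiH :: "pt set \<Rightarrow> pt \<Rightarrow> pt \<Rightarrow> real" where
  "PiH B x z = Pr x (\<lambda>p. hit B p \<noteq> \<infinity> \<and> p (the_enat (hit B p)) = z)"

lemma meas_PiH: "{w \<in> space SRW. hit B (walk x w) \<noteq> \<infinity> \<and> walk x w (the_enat (hit B (walk x w))) = z} \<in> sets SRW"
proof -
  have "(\<lambda>w. (\<lambda>i w. i \<noteq> \<infinity> \<and> walk x w (the_enat i) = z) (hit B (walk x w)) w) \<in> measurable SRW (count_space UNIV)"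
    by (rule measurable_compose_countable[OF _ hit_meas])
       (rule measurable_compose[OF walk_meas], simp)
  then have "(\<lambda>w. hit B (walk x w) \<noteq> \<infinity> \<and> walk x w (the_enat (hit B (walk x w))) = z) -` {True} \<inter> space SRW \<in> sets SRW"
    by (rule measurable_sets) simp
  moreover have "(\<lambda>w. hit B (walk x w) \<noteq> \<infinity> \<and> walk x w (the_enat (hit B (walk x w))) = z) -` {True} \<inter> space SRW
     = {w \<in> space SRW. hit B (walk x w) \<noteq> \<infinity> \<and> walk x w (the_enat (hit B (walk x w))) = z}" by auto
  ultimately show ?thesis by simp
qed

lemma PiH_B: "x \<in> B \<Longrightarrow> PiH B x z = (if x = z then 1 else 0)"
proof -
  assume x: "x \<in> B"
  have "PiH B x z = Pr x (\<lambda>p. x = z)" unfolding PiH_def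
  proof (intro Pr_cong)
    fix w
    have "hit B (walk x w) = 0" using x by (simp add: hit0_iff)
    then show "(hit B (walk x w) \<noteq> \<infinity> \<and> walk x w (the_enat (hit B (walk x w))) = z) = (x = z)"
      by (simp add: zero_enat_def)
  qed
  then show ?thesis by (cases "x = z") (simp_all add: Pr_True Pr_False)
qed

lemma PiH_pc: "x \<notin> B \<Longrightarrow> (hit B (pc x p) \<noteq> \<infinity> \<and> pc x p (the_enat (hit B (pc x p))) = z)
    = (hit B p \<noteq> \<infinity> \<and> p (the_enat (hit B p)) = z)"
  by (cases "hit B p") (simp_all add: hit_pc eSuc_enat)

lemma PiH_harm: "x \<notin> B \<Longrightarrow> nsum (\<lambda>y. PiH B y z) x = 4 * PiH B x z"
proof -
  assume x: "x \<notin> B"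
  have "PiH B x z = (\<Sum>s\<in>steps. Pr (addp x s) (\<lambda>p. hit B (pc x p) \<noteq> \<infinity> \<and> pc x p (the_enat (hit B (pc x p))) = z)) / 4"
    unfolding PiH_def by (rule markov) (rule meas_PiH)
  also have "\<dots> = nsum (\<lambda>y. PiH B y z) x / 4"
    unfolding nsum_def PiH_def by (intro sum.cong refl arg_cong[where f="\<lambda>s. s / 4"] Pr_cong') (rule PiH_pc[OF x])
  finally show ?thesis by simp
qed

definition PiSum :: "pt set \<Rightarrow> (pt \<Rightarrow> real) \<Rightarrow> pt \<Rightarrow> real" where
  "PiSum B g y = (\<Sum>z\<in>B. PiH B y z * g z)"

lemma PiSum_B: "finite B \<Longrightarrow> y \<in> B \<Longrightarrow> PiSum B g y = g y"
proof -
  assume B: "finite B" and y: "y \<in> B"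
  have "PiSum B g y = (\<Sum>z\<in>B. if y = z then g z else 0)"
    unfolding PiSum_def using y by (intro sum.cong refl) (simp add: PiH_B)
  then show ?thesis using sum.delta'[OF B, of y g] y by simp
qed

lemma PiSum_harm: "y \<notin> B \<Longrightarrow> nsum (PiSum B g) y = 4 * PiSum B g y"
proof -
  assume y: "y \<notin> B"
  have "nsum (PiSum B g) y = (\<Sum>z\<in>B. nsum (\<lambda>v. PiH B v z) y * g z)"
    unfolding PiSum_def nsum_def by (subst sum.swap) (simp add: sum_distrib_right)
  also have "\<dots> = (\<Sum>z\<in>B. 4 * (PiH B y z * g z))"
    by (intro sum.cong refl) (simp add: PiH_harm[OF y])
  finally show ?thesis by (simp add: PiSum_def sum_distrib_left)
qed

lemma nb_in_VN: "x \<in> VN - inner_bd VN \<Longrightarrow> s \<in> steps \<Longrightarrow> addp x s \<in> VN"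
  by (rule not_bd_nb) auto

lemma ext_fun_harm:
  assumes VN: "finite VN" and y: "y \<in> VN - inner_bd VN"
  shows "nsum (\<lambda>v. if v \<in> VN then PiSum (inner_bd VN) g v else g v) y
       = 4 * (if y \<in> VN then PiSum (inner_bd VN) g y else g y)"
proof -
  have "nsum (\<lambda>v. if v \<in> VN then PiSum (inner_bd VN) g v else g v) y = nsum (PiSum (inner_bd VN) g) y"
    unfolding nsum_def by (intro sum.cong refl) (simp add: nb_in_VN[OF y])
  also have "\<dots> = 4 * PiSum (inner_bd VN) g y" using y by (intro PiSum_harm) auto
  finally show ?thesis using y by simp
qed

lemma ext_repr:
  assumes VN: "finite VN" and F: "\<And>y. y \<in> VN - inner_bd VN \<Longrightarrow> nsum F y = 4 * F y"
    and x: "x \<in> VN"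
  shows "F x = PiSum (inner_bd VN) F x"
proof -
  have finB: "finite (inner_bd VN)" using finite_subset[OF inner_bd_sub VN] .
  have "F x = (\<lambda>v. if v \<in> VN then PiSum (inner_bd VN) F v else F v) x"
  proof (rule harm_unique[where D="VN - inner_bd VN"])
    show "finite (VN - inner_bd VN)" using VN by simp
  next
    fix y assume "y \<notin> VN - inner_bd VN"
    then show "F y = (if y \<in> VN then PiSum (inner_bd VN) F y else F y)"
      using PiSum_B[OF finB] by auto
  next
    fix y assume "y \<in> VN - inner_bd VN"
    then show "nsum F y = 4 * F y" by (rule F)
  next
    fix y assume "y \<in> VN - inner_bd VN"
    then show "nsum (\<lambda>v. if v \<in> VN then PiSum (inner_bd VN) F v else F v) y
       = 4 * (if y \<in> VN then PiSum (inner_bd VN) F y else F y)"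
      by (rule ext_fun_harm[OF VN])
  qed
  then show ?thesis using x by simp
qed

lemma harm_ext_repr:
  assumes VN: "finite VN" and x: "x \<in> VN"
  shows "harm_ext (lat_int VN) g x = PiSum (inner_bd VN) g x"
proof -
  define D where "D = VN - inner_bd VN"
  have finB: "finite (inner_bd VN)" using finite_subset[OF inner_bd_sub VN] .
  have finD: "finite D" using VN by (simp add: D_def)
  define v where "v y = (if y \<in> VN then PiSum (inner_bd VN) g y else g y)" for y
  have vout: "v y = g y" if "y \<notin> D" for y
    using that PiSum_B[OF finB] by (auto simp: v_def D_def)
  have vh: "nsum v y = 4 * v y" if "y \<in> D" for y
    unfolding v_def using ext_fun_harm[OF VN] that by (simp add: D_def)
  have P: "(\<forall>y. y \<notin> D \<longrightarrow> v y = g y) \<and> (\<forall>y\<in>D. Lap v y = 0)"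
    using vout vh by (simp add: Lap_nsum)
  have "harm_ext D g = v"
    unfolding harm_ext_def
  proof (rule the_equality)
    show "(\<forall>y. y \<notin> D \<longrightarrow> v y = g y) \<and> (\<forall>y\<in>D. Lap v y = 0)" by (rule P)
  next
    fix f assume f: "(\<forall>y. y \<notin> D \<longrightarrow> f y = g y) \<and> (\<forall>y\<in>D. Lap f y = 0)"
    show "f = v"
    proof
      fix y
      show "f y = v y"
      proof (rule harm_unique[OF finD])
        fix z assume z: "z \<notin> D" then have "f z = g z" using f by blast
        then show "f z = v z" using vout[OF z] by simp
      next
        fix z assume "z \<in> D" then have "Lap f z = 0" using f by blast
        then show "nsum f z = 4 * f z" by (simp add: Lap_nsum)
      next
        fix z assume "z \<in> D" then show "nsum v z = 4 * v z" by (rule vh)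
      qed
    qed
  qed
  then show ?thesis using x by (simp add: D_def lat_int_def v_def)
qed

lemma lat_mono: "S \<subseteq> T \<Longrightarrow> lat N S \<subseteq> lat N T"
  by (auto simp: lat_def)

lemma inner_part_sub: "inner_part V s \<subseteq> V"
  by (auto simp: inner_part_def)

lemma lat_finite:
  assumes "bounded S"
  shows "finite (lat N S)"
proof -
  obtain R where R: "\<forall>x\<in>S. norm x \<le> R" using assms by (auto simp: bounded_iff)
  define K where "K = \<lceil>real N * R\<rceil>"
  have "lat N S \<subseteq> {-K..K} \<times> {-K..K}"
  proof
    fix z assume "z \<in> lat N S"
    then obtain x where x: "x \<in> S" and e: "emb z = real N *\<^sub>R x" by (auto simp: lat_def)
    have "norm (emb z) \<le> real N * R"
      using R x by (simp add: e mult_left_mono)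
    moreover have "\<bar>real_of_int (fst z)\<bar> \<le> norm (emb z)"
      using norm_fst_le[of "real_of_int (fst z)" "real_of_int (snd z)"] by (simp add: emb_def)
    moreover have "\<bar>real_of_int (snd z)\<bar> \<le> norm (emb z)"
      using norm_snd_le[of "real_of_int (snd z)" "real_of_int (fst z)"] by (simp add: emb_def)
    ultimately have "\<bar>real_of_int (fst z)\<bar> \<le> real N * R" "\<bar>real_of_int (snd z)\<bar> \<le> real N * R"
      by linarith+
    then have "\<bar>fst z\<bar> \<le> K" "\<bar>snd z\<bar> \<le> K" unfolding K_def by linarith+
    then show "z \<in> {-K..K} \<times> {-K..K}" by (cases z) auto
  qed
  then show ?thesis by (rule finite_subset) simp
qed

theorem lemma3p7:
  fixes V W :: "(real \<times> real) set" and N :: nat and r :: real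
    and M :: "'a measure" and h :: "pt \<Rightarrow> 'a \<Rightarrow> real"
  assumes "V \<noteq> {}" "open V" "bounded V" "simply_connected V"
    and "W \<noteq> {}" "open W" "bounded W" "simply_connected W"
    and "V \<subseteq> W" "compact (closure V)" "closure V \<subseteq> W"
    and "N > 0" "r > 0"
    and "DGFF M (lat N W) h"
  defines "WN \<equiv> lat N W" and "VN \<equiv> lat N V"
    and "VNr \<equiv> lat N (inner_part V (r / real N))"
  defines "phi \<equiv> (\<lambda>\<omega>. harm_ext (lat_int VN) (\<lambda>x. h x \<omega>))"
    and "\<gamma> \<equiv> (\<lambda>x. Pr x (\<lambda>p. hit (- WN) p < hitp VNr p) / (2 * Cap WN VNr))"
  defines "phibar \<equiv> (\<lambda>\<omega>. \<Sum>x\<in>inner_bd VNr. \<gamma> x * phi \<omega> x)"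
    and "\<gamma>\<Pi> \<equiv> (\<lambda>y. Pr_init (inner_bd VNr) \<gamma>
                 (\<lambda>p. hit (inner_bd VN) p \<noteq> \<infinity> \<and> p (the_enat (hit (inner_bd VN) p)) = y))"
  shows "prob_space.variance M phibar =
           Pr_init (inner_bd VN) \<gamma>\<Pi> (\<lambda>p. hit VNr p < hit (- WN) p) / (2 * Cap WN VNr)"
proof -
  have Wf: "finite WN" unfolding WN_def by (rule lat_finite) (rule assms(7))
  have VN_sub: "VN \<subseteq> WN" unfolding VN_def WN_def by (rule lat_mono) (rule assms(9))
  have A_sub: "VNr \<subseteq> VN" unfolding VNr_def VN_def by (rule lat_mono) (rule inner_part_sub)
  have VNf: "finite VN" using finite_subset[OF VN_sub Wf] .
  have AW: "VNr \<subseteq> WN" using A_sub VN_sub by blast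
  define B where "B = inner_bd VN"
  have B_sub: "B \<subseteq> VN" unfolding B_def by (rule inner_bd_sub)
  have finB: "finite B" using finite_subset[OF B_sub VNf] .
  have BW: "B \<subseteq> WN" using B_sub VN_sub by blast
  define dA where "dA = inner_bd VNr"
  have dA_sub: "dA \<subseteq> VN" unfolding dA_def using inner_bd_sub A_sub by blast
  have finA: "finite dA" using finite_subset[OF dA_sub VNf] .
  define \<kappa> where "\<kappa> = 2 * Cap WN VNr"
  have \<kappa>: "\<kappa> = (\<Sum>x\<in>dA. eqm WN VNr x)"
    unfolding \<kappa>_def dA_def using Cap_eq[OF Wf AW] by simp
  have \<kappa>_nn: "\<kappa> \<ge> 0" unfolding \<kappa> by (intro sum_nonneg) (simp add: eqm_def Pr_nonneg)
  have \<gamma>_eq: "\<gamma> x = eqm WN VNr x / \<kappa>" for x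
    by (simp add: \<gamma>_def eqm_def \<kappa>_def)
  have \<gamma>_nn: "\<gamma> x \<ge> 0" for x
    unfolding \<gamma>_eq using \<kappa>_nn by (simp add: eqm_def Pr_nonneg)
  define c where "c z = (\<Sum>x\<in>dA. \<gamma> x * PiH B x z)" for z
  have c_nn: "c z \<ge> 0" for z
    unfolding c_def by (intro sum_nonneg mult_nonneg_nonneg \<gamma>_nn) (simp add: PiH_def Pr_nonneg)
  have \<gamma>\<Pi>_eq: "\<gamma>\<Pi> z = c z" for z
    by (simp add: \<gamma>\<Pi>_def Pr_init_def c_def PiH_def B_def dA_def)
  define cc where "cc z = (if z \<in> B then c z else 0)" for z
  have restrict: "(\<Sum>z\<in>WN. cc z * F z) = (\<Sum>z\<in>B. c z * F z)" for F
  proof -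
    have "(\<Sum>z\<in>WN. cc z * F z) = (\<Sum>z\<in>WN. if z \<in> B then c z * F z else 0)"
      by (intro sum.cong refl) (simp add: cc_def)
    also have "\<dots> = (\<Sum>z\<in>WN \<inter> B. c z * F z)" by (rule sum.inter_restrict[OF Wf, symmetric])
    also have "WN \<inter> B = B" using BW by blast
    finally show ?thesis .
  qed
  have phibar_eq: "phibar \<omega> = (\<Sum>z\<in>WN. cc z * h z \<omega>)" for \<omega>
  proof -
    have "phibar \<omega> = (\<Sum>x\<in>dA. \<gamma> x * PiSum B (\<lambda>z. h z \<omega>) x)"
      unfolding phibar_def dA_def[symmetric]
    proof (intro sum.cong refl)
      fix x assume "x \<in> dA"
      then have "x \<in> VN" using dA_sub by blast
      then show "\<gamma> x * phi \<omega> x = \<gamma> x * PiSum B (\<lambda>z. h z \<omega>) x"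
        unfolding phi_def B_def by (simp add: harm_ext_repr[OF VNf])
    qed
    also have "\<dots> = (\<Sum>z\<in>B. c z * h z \<omega>)"
      unfolding PiSum_def c_def
      by (simp add: sum_distrib_left sum_distrib_right mult.assoc) (rule sum.swap)
    also have "\<dots> = (\<Sum>z\<in>WN. cc z * h z \<omega>)" by (rule restrict[symmetric])
    finally show ?thesis .
  qed
  define f where "f = hp VNr (- WN)"
  have inner: "(\<Sum>x\<in>B. c x * Green WN x y) = f y / \<kappa>" if y: "y \<in> B" for y
  proof -
    have harmG: "nsum (\<lambda>v. Green WN v y) v = 4 * Green WN v y" if v: "v \<in> VN - inner_bd VN" for v
    proof -
      have "v \<in> WN" "v \<noteq> y" using v y VN_sub by (auto simp: B_def)
      then show ?thesis using Green_eq[OF Wf, of v y] by simp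
    qed
    have "(\<Sum>x\<in>B. c x * Green WN x y) = (\<Sum>x'\<in>dA. \<gamma> x' * PiSum B (\<lambda>v. Green WN v y) x')"
      unfolding c_def PiSum_def
      by (simp add: sum_distrib_left sum_distrib_right mult.assoc) (rule sum.swap)
    also have "\<dots> = (\<Sum>x'\<in>dA. \<gamma> x' * Green WN x' y)"
    proof (intro sum.cong refl)
      fix x' assume "x' \<in> dA"
      then have "x' \<in> VN" using dA_sub by blast
      then show "\<gamma> x' * PiSum B (\<lambda>v. Green WN v y) x' = \<gamma> x' * Green WN x' y"
        using ext_repr[OF VNf harmG] by (simp add: B_def)
    qed
    also have "\<dots> = (\<Sum>x'\<in>dA. Green WN y x' * eqm WN VNr x') / \<kappa>"
      by (simp add: \<gamma>_eq sum_divide_distrib Green_sym[OF Wf, of y] mult.commute)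
    also have "(\<Sum>x'\<in>dA. Green WN y x' * eqm WN VNr x') = f y"
      unfolding f_def dA_def by (rule last_exit[OF Wf AW, symmetric])
    finally show ?thesis .
  qed
  define s where "s = (\<Sum>x\<in>WN. \<Sum>y\<in>WN. cc x * cc y * Green WN x y)"
  have s_eq: "s = (\<Sum>y\<in>B. c y * (f y / \<kappa>))"
  proof -
    have "s = (\<Sum>y\<in>WN. cc y * (\<Sum>x\<in>WN. cc x * Green WN x y))"
      unfolding s_def by (subst sum.swap) (simp add: sum_distrib_left algebra_simps)
    also have "\<dots> = (\<Sum>y\<in>WN. cc y * (\<Sum>x\<in>B. c x * Green WN x y))"
      by (simp add: restrict)
    also have "\<dots> = (\<Sum>y\<in>B. c y * (\<Sum>x\<in>B. c x * Green WN x y))"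
      by (rule restrict)
    also have "\<dots> = (\<Sum>y\<in>B. c y * (f y / \<kappa>))"
      by (intro sum.cong refl) (simp add: inner)
    finally show ?thesis .
  qed
  have rhs_eq: "Pr_init (inner_bd VN) \<gamma>\<Pi> (\<lambda>p. hit VNr p < hit (- WN) p) / (2 * Cap WN VNr) = s"
    unfolding s_eq Pr_init_def B_def[symmetric] \<kappa>_def[symmetric]
    by (simp add: \<gamma>\<Pi>_eq f_def hp_def sum_divide_distrib)
  have s_nn: "s \<ge> 0"
    unfolding s_eq f_def using \<kappa>_nn
    by (intro sum_nonneg mult_nonneg_nonneg c_nn divide_nonneg_nonneg) (simp_all add: hp_def Pr_nonneg)
  have G: "centered_gaussian_field M WN (Green WN) h"
    using assms(14) by (simp add: DGFF_def WN_def)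
  then interpret P: prob_space M by (simp add: centered_gaussian_field_def)
  have Gc: "(s > 0 \<longrightarrow> distributed M lborel (\<lambda>\<omega>. \<Sum>x\<in>WN. cc x * h x \<omega>) (normal_density 0 (sqrt s))) \<and>
        (s \<le> 0 \<longrightarrow> (AE \<omega> in M. (\<Sum>x\<in>WN. cc x * h x \<omega>) = 0))"
    using G unfolding centered_gaussian_field_def s_def Let_def by blast
  have ph: "phibar = (\<lambda>\<omega>. \<Sum>x\<in>WN. cc x * h x \<omega>)" using phibar_eq by blast
  show ?thesis
  proof (cases "s > 0")
    case True
    then have "distributed M lborel phibar (normal_density 0 (sqrt s))" using Gc ph by simp
    then have "P.variance phibar = (sqrt s)\<^sup>2"
      by (rule P.normal_distributed_variance[rotated]) (use True in simp)
    then show ?thesis using rhs_eq s_nn by simp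
  next
    case False
    then have s0: "s = 0" using s_nn by simp
    have ae: "AE \<omega> in M. phibar \<omega> = 0" using Gc ph False by simp
    have e0: "P.expectation phibar = 0" by (rule integral_eq_zero_AE[OF ae])
    have "P.variance phibar = 0"
      unfolding e0 by (rule integral_eq_zero_AE) (use ae in auto)
    then show ?thesis using rhs_eq s0 by simp
  qed
qed

end
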